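(* Let $f:\mathbb{R}\to(0,\infty)$ be a nonvanishing symmetric, standardized probability density ($f(-z)=f(z)$ for all $z$) and let $\Pi:\mathbb{R}\times\mathbb{R}\to[0,1]$ be a skewing function. Consider the skew-symmetric family with densities $$f^\Pi_{\mu,\sigma,\delta}(x)=2\sigma^{-1}f\bigl(\sigma^{-1}(x-\mu)\bigr)\,\Pi\bigl(\sigma^{-1}(x-\mu),\delta\bigr),\qquad \mu\in\mathbb{R},\ \sigma>0,\ \delta\in\mathbb{R}.$$ Assume Assumption (A2$^+$) (stated in the context) holds. Then the couple $(f,\Pi)$ leads to a skew-symmetric family subject to the double singularity phenomenon (defined in the context) if and only if $f$ is the standard normal density $\phi(z)=(2\pi)^{-1/2}e^{-z^2/2}$ and the skewing function satisfies $\psi(z):=\partial_\delta\Pi(z,\delta)\vert_{\delta=0}=cz$ for all $z$, for some real constant $c$. (The family is then a particular generalized skew-normal family, i.e. one of the form above with $f=\phi$.)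
   Context: A skewing function is a map $\Pi:\mathbb{R}\times\mathbb{R}\to[0,1]$ with $\Pi(-z,\delta)+\Pi(z,\delta)=1$ for all $z,\delta$, $\Pi(z,0)=1/2$ for all $z$, and, whenever the relevant derivatives of order $s$ at $\delta=0$ exist, $\partial_z^s\Pi(z,\delta)\vert_{\delta=0}=0$ for all $z$ and, for $s$ even, $\partial_\delta^s\Pi(z,\delta)\vert_{\delta=0}=0$ for all $z$. "Standardized" means the scale of $f$ is fixed to one (an identification constraint for $\sigma$). Write $\varphi_f=-\dot f/f$. Assumption (A2): (i) $(z,\delta)\mapsto\Pi(z,\delta)$ is continuously differentiable at $\delta=0$ for all $z$; (ii) $\psi(z):=\partial_\delta\Pi(z,\delta)\vert_{\delta=0}$ admits a primitive $\Psi$; (iii) $\int\psi^2(z)f(z)\,dz<\infty$. Let $\mathcal{A}=\{a\in\mathbb{R}:\int_{-\infty}^\infty e^{-a\Psi(z)}dz<\infty\}$ and $\mathcal{E}_\Psi=\{g_a=e^{-a\Psi}/\int e^{-a\Psi(z)}dz : a\in\mathcal{A}\}$. The family is subject to (simple) Fisher singularity at $\delta=0$ when its Fisher information matrix in $(\mu,\sigma,\delta)$ at $\delta=0$ is singular; this happens iff $f=g_a\in\mathcal{E}_\Psi$ for some $a\in\mathcal{A}$ (equivalently $\varphi_f=a\psi$). Assumption (A2$^+$): (A2) holds, $f=g_a$ for some $a\in\mathcal{A}$, and moreover (i) $(z,\delta)\mapsto\Pi(z,\delta)$ is twice continuously differentiable at $(z,0)$ for all $z$; (ii) with $\dot\psi(z)=\partial_\delta\partial_z\Pi(z,\delta)\vert_{\delta=0}$,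 the integrals $\int\psi^2(z)z^2f(z)dz$ and $\int(2a^{-1}\dot\psi(z)-2\psi^2(z))^2f(z)dz$ are finite. Double singularity: with $f=g_a$, reparametrize as $\mu^{(1)}=\mu+2\delta\sigma/a$, $\sigma^{(1)}=\sigma$, $\delta^{(1)}=\mathrm{sign}(\delta)\delta^2$. At $\delta^{(1)}=0$ the scores (with $z=\sigma^{-1}(x-\mu)$) are $\sigma^{-1}a\psi(z)$ for $\mu^{(1)}$, $\sigma^{-1}(az\psi(z)-1)$ for $\sigma^{(1)}$, and $\pm2[a^{-1}\dot\psi(z)-\psi^2(z)]$ for $\delta^{(1)}$ (left/right derivatives). The family is subject to double singularity if the Fisher information matrix (covariance of these three scores) is singular, equivalently if there is a constant $b\in\mathbb{R}$ with $b(az\psi(z)-1)/\sigma=(2/a)\dot\psi(z)-2\psi^2(z)$ for Lebesgue-a.e. $z$. *)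

theory Defs
  imports "HOL-Analysis.Analysis" "HOL-Probability.Distributions"
begin

definition has_nth_deriv_at :: "(real \<Rightarrow> real) \<Rightarrow> nat \<Rightarrow> real \<Rightarrow> bool" where
  "has_nth_deriv_at g s x \<longleftrightarrow>
     (\<exists>e>0. \<forall>k. k + 1 < s \<longrightarrow> (\<forall>y\<in>ball x e. (deriv ^^ k) g differentiable (at y)))
     \<and> (\<forall>k. k < s \<longrightarrow> (deriv ^^ k) g differentiable (at x))"

text \<open>Skewing function (Pi written as curried function of z and delta).\<close>
definition skewing_function :: "(real \<Rightarrow> real \<Rightarrow> real) \<Rightarrow> bool" where
  "skewing_function P \<longleftrightarrow>
     (\<forall>z d. 0 \<le> P z d \<and> P z d \<le> 1)
   \<and> (\<forall>z d. P (-z) d + P z d = 1)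
   \<and> (\<forall>z. P z 0 = 1/2)
   \<and> (\<forall>s z. s \<ge> 1 \<longrightarrow> has_nth_deriv_at (\<lambda>w. P w 0) s z \<longrightarrow> (deriv ^^ s) (\<lambda>w. P w 0) z = 0)
   \<and> (\<forall>s z. s \<ge> 1 \<longrightarrow> even s \<longrightarrow> has_nth_deriv_at (\<lambda>d. P z d) s 0 \<longrightarrow> (deriv ^^ s) (\<lambda>d. P z d) 0 = 0)"

definition skew_psi :: "(real \<Rightarrow> real \<Rightarrow> real) \<Rightarrow> real \<Rightarrow> real" where
  "skew_psi P z = deriv (\<lambda>d. P z d) 0"

definition skew_dpsi :: "(real \<Rightarrow> real \<Rightarrow> real) \<Rightarrow> real \<Rightarrow> real" where
  "skew_dpsi P z = deriv (\<lambda>d. deriv (\<lambda>w. P w d) z) 0"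

definition C1_at :: "(real \<times> real \<Rightarrow> real) \<Rightarrow> real \<times> real \<Rightarrow> bool" where
  "C1_at F p \<longleftrightarrow> (\<exists>U D. open U \<and> p \<in> U
      \<and> (\<forall>q\<in>U. (F has_derivative blinfun_apply (D q)) (at q))
      \<and> continuous (at p) D)"

definition C2_at :: "(real \<times> real \<Rightarrow> real) \<Rightarrow> real \<times> real \<Rightarrow> bool" where
  "C2_at F p \<longleftrightarrow> (\<exists>U D D2. open U \<and> p \<in> U
      \<and> (\<forall>q\<in>U. (F has_derivative blinfun_apply (D q)) (at q))
      \<and> (\<forall>q\<in>U. (D has_derivative blinfun_apply (D2 q)) (at q))
      \<and> continuous (at p) D2)"

definition sym_std_density :: "(real \<Rightarrow> real) \<Rightarrow> bool" where
  "sym_std_density f \<longleftrightarrow>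
     f \<in> borel_measurable lborel
   \<and> (\<forall>z. f z > 0)
   \<and> (\<forall>z. f (-z) = f z)
   \<and> integrable lborel f \<and> (LINT z|lborel. f z) = 1
   \<and> integrable lborel (\<lambda>z. z\<^sup>2 * f z) \<and> (LINT z|lborel. z\<^sup>2 * f z) = 1"

definition exp_param_set :: "(real \<Rightarrow> real) \<Rightarrow> real set" where
  "exp_param_set \<Psi> = {a. integrable lborel (\<lambda>z. exp (- a * \<Psi> z))}"

definition g_exp :: "(real \<Rightarrow> real) \<Rightarrow> real \<Rightarrow> real \<Rightarrow> real" where
  "g_exp \<Psi> a z = exp (- a * \<Psi> z) / (LINT t|lborel. exp (- a * \<Psi> t))"

definition assumption_A2 :: "(real \<Rightarrow> real) \<Rightarrow> (real \<Rightarrow> real \<Rightarrow> real) \<Rightarrow> (real \<Rightarrow> real) \<Rightarrow> bool" where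
  "assumption_A2 f P \<Psi> \<longleftrightarrow>
     (\<forall>z. C1_at (\<lambda>(w, d). P w d) (z, 0))
   \<and> (\<forall>z. (\<Psi> has_real_derivative skew_psi P z) (at z))
   \<and> integrable lborel (\<lambda>z. (skew_psi P z)\<^sup>2 * f z)"

definition assumption_A2plus :: "(real \<Rightarrow> real) \<Rightarrow> (real \<Rightarrow> real \<Rightarrow> real) \<Rightarrow> (real \<Rightarrow> real) \<Rightarrow> real \<Rightarrow> bool" where
  "assumption_A2plus f P \<Psi> a \<longleftrightarrow>
     assumption_A2 f P \<Psi>
   \<and> a \<in> exp_param_set \<Psi> \<and> f = g_exp \<Psi> a
   \<and> (\<forall>z. C2_at (\<lambda>(w, d). P w d) (z, 0))
   \<and> integrable lborel (\<lambda>z. (skew_psi P z)\<^sup>2 * z\<^sup>2 * f z)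
   \<and> integrable lborel (\<lambda>z. (2 / a * skew_dpsi P z - 2 * (skew_psi P z)\<^sup>2)\<^sup>2 * f z)"

definition skew_sym_density :: "(real \<Rightarrow> real) \<Rightarrow> (real \<Rightarrow> real \<Rightarrow> real) \<Rightarrow> real \<Rightarrow> real \<Rightarrow> real \<Rightarrow> real \<Rightarrow> real" where
  "skew_sym_density f P \<mu> \<sigma> \<delta> x = 2 / \<sigma> * f ((x - \<mu>) / \<sigma>) * P ((x - \<mu>) / \<sigma>) \<delta>"

text \<open>Scores at delta^(1) = 0 in the reparametrization (mu^(1), sigma^(1), delta^(1)):
index 1 = mu^(1), 2 = sigma^(1), 3 = delta^(1) (right derivative; the sign does not
affect singularity).\<close>
definition double_scores :: "(real \<Rightarrow> real \<Rightarrow> real) \<Rightarrow> real \<Rightarrow> real \<Rightarrow> real \<Rightarrow> 3 \<Rightarrow> real \<Rightarrow> real" where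
  "double_scores P a \<mu> \<sigma> i x =
     (let z = (x - \<mu>) / \<sigma> in
      if i = 1 then a * skew_psi P z / \<sigma>
      else if i = 2 then (a * z * skew_psi P z - 1) / \<sigma>
      else 2 * (skew_dpsi P z / a - (skew_psi P z)\<^sup>2))"

definition double_fisher_info :: "(real \<Rightarrow> real) \<Rightarrow> (real \<Rightarrow> real \<Rightarrow> real) \<Rightarrow> real \<Rightarrow> real \<Rightarrow> real \<Rightarrow> real^3^3" where
  "double_fisher_info f P a \<mu> \<sigma> =
     (\<chi> i j. LINT x|lborel. double_scores P a \<mu> \<sigma> i x * double_scores P a \<mu> \<sigma> j x
                             * skew_sym_density f P \<mu> \<sigma> 0 x)"

definition double_singular :: "(real \<Rightarrow> real) \<Rightarrow> (real \<Rightarrow> real \<Rightarrow> real) \<Rightarrow> real \<Rightarrow> bool" where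
  "double_singular f P a \<longleftrightarrow> (\<forall>\<mu> \<sigma>. \<sigma> > 0 \<longrightarrow> det (double_fisher_info f P a \<mu> \<sigma>) = 0)"

end

theory Submission
  imports Defs
begin


lemma second_deriv_approx:
  fixes F :: "real\<times>real \<Rightarrow> real" and D :: "real\<times>real \<Rightarrow> ((real\<times>real) \<Rightarrow>\<^sub>L real)"
    and D2 :: "(real\<times>real) \<Rightarrow>\<^sub>L ((real\<times>real) \<Rightarrow>\<^sub>L real)"
  assumes U: "open U" "p \<in> U" and dF: "\<forall>q\<in>U. (F has_derivative blinfun_apply (D q)) (at q)"
   and dD: "(D has_derivative blinfun_apply D2) (at p)"
   and nu: "norm u \<le> 1" and nv: "norm v \<le> 1" and e: "e > 0"
  shows "\<exists>T>0. \<forall>t. 0<t \<and> t<T \<longrightarrow> \<bar>F(p + t*\<^sub>R u + t*\<^sub>R v) - F(p + t*\<^sub>R u) - F(p + t*\<^sub>R v) + F p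
            - t\<^sup>2 * blinfun_apply (blinfun_apply D2 v) u\<bar> \<le> 3*e*t\<^sup>2"
proof -
  obtain d1 where d1: "d1 > 0" "ball p d1 \<subseteq> U" using U open_contains_ball by blast
  obtain d2 where d2: "d2 > 0" "\<forall>y. norm(y-p)<d2 \<longrightarrow> norm (D y - D p - blinfun_apply D2 (y-p)) \<le> e * norm (y-p)"
    using dD e unfolding has_derivative_at_alt by blast
  define T where "T = min d1 d2 / 2"
  have "T > 0" using d1 d2 by (simp add: T_def)
  moreover have "\<bar>F(p + t*\<^sub>R u + t*\<^sub>R v) - F(p + t*\<^sub>R u) - F(p + t*\<^sub>R v) + F p
            - t\<^sup>2 * blinfun_apply (blinfun_apply D2 v) u\<bar> \<le> 3*e*t\<^sup>2" if t: "0<t" "t<T" for t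
  proof -
    define g where "g s = F(p + s*\<^sub>R u + t*\<^sub>R v) - F(p + s*\<^sub>R u)" for s
    define g' where "g' s = blinfun_apply (D (p + s*\<^sub>R u + t*\<^sub>R v)) u - blinfun_apply (D (p + s*\<^sub>R u)) u" for s
    have inU: "p + s*\<^sub>R u + t*\<^sub>R v \<in> U \<and> p + s*\<^sub>R u \<in> U" if s: "0 \<le> s" "s \<le> t" for s
    proof -
      have "norm (s*\<^sub>R u + t*\<^sub>R v) \<le> s + t"
        using norm_triangle_ineq[of "s*\<^sub>R u" "t*\<^sub>R v"] nu nv s t
        by (smt (verit, best) mult_left_le norm_scaleR)
      moreover have "norm (s*\<^sub>R u) \<le> s" using nu s by (simp add: mult_left_le)
      ultimately have "norm (s*\<^sub>R u + t*\<^sub>R v) < d1" "norm (s*\<^sub>R u) < d1" using d1 s t unfolding T_def by auto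
      moreover have dd: "\<And>x. dist p (p + x) = norm x" by (metis add_diff_cancel_left' dist_commute dist_norm)
      ultimately have "p + (s*\<^sub>R u + t*\<^sub>R v) \<in> ball p d1" "p + s*\<^sub>R u \<in> ball p d1"
        unfolding mem_ball by (simp_all only: dd)
      then show ?thesis using d1(2) by (auto simp: add.assoc)
    qed
    have dq: "((\<lambda>s. F (q + s *\<^sub>R u)) has_real_derivative blinfun_apply (D (q + s0 *\<^sub>R u)) u) (at s0)"
      if "q + s0 *\<^sub>R u \<in> U" for q s0
    proof -
      have "((\<lambda>s. q + s *\<^sub>R u) has_derivative (\<lambda>h. h *\<^sub>R u)) (at s0)"
        by (auto intro!: derivative_eq_intros)
      from has_derivative_compose[OF this dF[rule_format, OF that]]
      have "((\<lambda>s. F (q + s *\<^sub>R u)) has_derivative (\<lambda>h. blinfun_apply (D (q + s0 *\<^sub>R u)) (h *\<^sub>R u))) (at s0)"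
        by (simp add: o_def)
      then show ?thesis unfolding has_field_derivative_def
        by (simp add: blinfun.scaleR_right mult.commute[of _ "blinfun_apply _ _"])
    qed
    have dg: "(g has_real_derivative g' s) (at s)" if "0 \<le> s" "s \<le> t" for s
    proof -
      have a: "((\<lambda>s. F ((p + t*\<^sub>R v) + s *\<^sub>R u)) has_real_derivative blinfun_apply (D ((p + t*\<^sub>R v) + s *\<^sub>R u)) u) (at s)"
        by (rule dq) (use inU[OF that] in \<open>simp add: algebra_simps\<close>)
      have b: "((\<lambda>s. F (p + s *\<^sub>R u)) has_real_derivative blinfun_apply (D (p + s *\<^sub>R u)) u) (at s)"
        by (rule dq) (use inU[OF that] in simp)
      show ?thesis using DERIV_diff[OF a b] unfolding g_def g'_def by (simp add: algebra_simps)
    qed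
    obtain xi where xi: "0 < xi" "xi < t" "g t - g 0 = (t - 0) * g' xi"
      using MVT2[of 0 t g g'] dg t by auto
    have close1: "norm ((xi*\<^sub>R u + t*\<^sub>R v)) \<le> 2*t"
      using norm_triangle_ineq[of "xi*\<^sub>R u" "t*\<^sub>R v"] nu nv xi
      by (smt (verit, best) mult_left_le norm_scaleR)
    have close0: "norm (xi*\<^sub>R u) \<le> t" using nu xi by (smt (verit) mult_left_le norm_scaleR)
    define A1 where "A1 = D (p + xi*\<^sub>R u + t*\<^sub>R v) - D p - blinfun_apply D2 (xi*\<^sub>R u + t*\<^sub>R v)"
    define A0 where "A0 = D (p + xi*\<^sub>R u) - D p - blinfun_apply D2 (xi*\<^sub>R u)"
    have nA1: "norm A1 \<le> e * (2*t)"
    proof -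
      have "norm A1 \<le> e * norm (xi*\<^sub>R u + t*\<^sub>R v)"
        using d2(2)[rule_format, of "p + xi*\<^sub>R u + t*\<^sub>R v"] close1 t d1 d2 unfolding A1_def T_def
        by (simp add: algebra_simps)
      also have "\<dots> \<le> e * (2*t)" using close1 e by simp
      finally show ?thesis .
    qed
    have nA0: "norm A0 \<le> e * t"
    proof -
      have "norm A0 \<le> e * norm (xi*\<^sub>R u)"
        using d2(2)[rule_format, of "p + xi*\<^sub>R u"] close0 t d1 d2 unfolding A0_def T_def
        by (simp add: algebra_simps)
      also have "\<dots> \<le> e * t" using close0 e by simp
      finally show ?thesis .
    qed
    have geq: "g' xi - t * blinfun_apply (blinfun_apply D2 v) u = blinfun_apply A1 u - blinfun_apply A0 u"
      unfolding g'_def A1_def A0_def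
      by (simp add: blinfun.bilinear_simps algebra_simps)
    have "\<bar>blinfun_apply A1 u\<bar> \<le> e*(2*t)"
      using norm_blinfun[of A1 u] nA1 nu
      by (smt (verit) mult_left_le norm_ge_zero real_norm_def)
    moreover have "\<bar>blinfun_apply A0 u\<bar> \<le> e*t"
      using norm_blinfun[of A0 u] nA0 nu
      by (smt (verit) mult_left_le norm_ge_zero real_norm_def)
    ultimately have "\<bar>g' xi - t * blinfun_apply (blinfun_apply D2 v) u\<bar> \<le> 3*e*t"
      unfolding geq by linarith
    then have le: "t * \<bar>g' xi - t * blinfun_apply (blinfun_apply D2 v) u\<bar> \<le> t * (3*e*t)"
      using t by (simp add: mult_left_mono)
    have eq: "F(p + t*\<^sub>R u + t*\<^sub>R v) - F(p + t*\<^sub>R u) - F(p + t*\<^sub>R v) + F p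
            - t\<^sup>2 * blinfun_apply (blinfun_apply D2 v) u = t * (g' xi - t * blinfun_apply (blinfun_apply D2 v) u)"
      using xi(3) unfolding g_def by (simp add: power2_eq_square algebra_simps)
    have "\<bar>F(p + t*\<^sub>R u + t*\<^sub>R v) - F(p + t*\<^sub>R u) - F(p + t*\<^sub>R v) + F p
            - t\<^sup>2 * blinfun_apply (blinfun_apply D2 v) u\<bar> = t * \<bar>g' xi - t * blinfun_apply (blinfun_apply D2 v) u\<bar>"
      unfolding eq using t by (simp add: abs_mult)
    also have "\<dots> \<le> t * (3*e*t)" by (rule le)
    also have "\<dots> = 3*e*t\<^sup>2" by (simp add: power2_eq_square)
    finally show ?thesis .
  qed
  ultimately show ?thesis by blast
qed

lemma second_deriv_symm:
  fixes F :: "real\<times>real \<Rightarrow> real" and D :: "real\<times>real \<Rightarrow> ((real\<times>real) \<Rightarrow>\<^sub>L real)"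
    and D2 :: "(real\<times>real) \<Rightarrow>\<^sub>L ((real\<times>real) \<Rightarrow>\<^sub>L real)"
  assumes U: "open U" "p \<in> U" and dF: "\<forall>q\<in>U. (F has_derivative blinfun_apply (D q)) (at q)"
   and dD: "(D has_derivative blinfun_apply D2) (at p)"
  shows "blinfun_apply (blinfun_apply D2 (0,1)) (1,0) = blinfun_apply (blinfun_apply D2 (1,0)) (0,1)"
proof -
  define A where "A = blinfun_apply (blinfun_apply D2 (0,1)) (1,0)"
  define B where "B = blinfun_apply (blinfun_apply D2 (1,0)) (0,1)"
  have "\<bar>A - B\<bar> \<le> 6*e" if e: "e > 0" for e
  proof -
    obtain T1 where T1: "T1 > 0" "\<forall>t. 0<t \<and> t<T1 \<longrightarrow> \<bar>F(p + t*\<^sub>R (1,0) + t*\<^sub>R (0,1)) - F(p + t*\<^sub>R (1,0)) - F(p + t*\<^sub>R (0,1)) + F p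
            - t\<^sup>2 * A\<bar> \<le> 3*e*t\<^sup>2"
      using second_deriv_approx[OF U dF dD, of "(1,0)" "(0,1)" e] e unfolding A_def by auto
    obtain T2 where T2: "T2 > 0" "\<forall>t. 0<t \<and> t<T2 \<longrightarrow> \<bar>F(p + t*\<^sub>R (0,1) + t*\<^sub>R (1,0)) - F(p + t*\<^sub>R (0,1)) - F(p + t*\<^sub>R (1,0)) + F p
            - t\<^sup>2 * B\<bar> \<le> 3*e*t\<^sup>2"
      using second_deriv_approx[OF U dF dD, of "(0,1)" "(1,0)" e] e unfolding B_def by auto
    define t where "t = min T1 T2 / 2"
    have t: "0 < t" "t < T1" "t < T2" using T1 T2 by (auto simp: t_def)
    have sw: "p + t*\<^sub>R (0,1) + t*\<^sub>R (1,0) = p + t*\<^sub>R (1,0) + t*\<^sub>R (0,1)" by (simp add: algebra_simps)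
    have "\<bar>t\<^sup>2 * A - t\<^sup>2 * B\<bar> \<le> 6*e*t\<^sup>2"
      using T1(2)[rule_format, of t] T2(2)[rule_format, of t] t unfolding sw by linarith
    moreover have "\<bar>t\<^sup>2 * A - t\<^sup>2 * B\<bar> = t\<^sup>2 * \<bar>A - B\<bar>"
      by (simp add: abs_mult right_diff_distrib[symmetric])
    ultimately have "t\<^sup>2 * \<bar>A - B\<bar> \<le> t\<^sup>2 * (6*e)" by (simp add: algebra_simps)
    then show ?thesis using t by (simp add: mult_le_cancel_left)
  qed
  note h = this
  have "\<bar>A - B\<bar> \<le> 0"
  proof (rule ccontr)
    assume n: "\<not> \<bar>A - B\<bar> \<le> 0"
    then have "\<bar>A - B\<bar> / 12 > 0" by auto
    from h[OF this] n show False by auto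
  qed
  then show ?thesis unfolding A_def B_def by simp
qed



lemma partial2:
  fixes G :: "real\<times>real \<Rightarrow> 'b::real_normed_vector"
  assumes "(G has_derivative G') (at (w,d))"
  shows "((\<lambda>t. G (w,t)) has_derivative (\<lambda>h. h *\<^sub>R G' (0,1))) (at d)"
proof -
  have "((\<lambda>t. (w,t)) has_derivative (\<lambda>h. (0,h))) (at d)"
    by (rule has_derivative_Pair[OF has_derivative_const has_derivative_ident])
  from has_derivative_compose[OF this assms]
  have d1: "((\<lambda>t. G (w,t)) has_derivative (\<lambda>h. G' (0,h))) (at d)" by (simp add: o_def)
  have lin: "G' (0,h) = h *\<^sub>R G' (0,1)" for h
  proof -
    have bl: "bounded_linear G'" using assms has_derivative_bounded_linear by blast
    have "G' (0,h) = G' (h *\<^sub>R (0,1))" by simp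
    also have "\<dots> = h *\<^sub>R G' (0,1)" by (rule linear_cmul[OF bounded_linear.linear[OF bl]])
    finally show ?thesis .
  qed
  have e: "(\<lambda>h. G' (0,h)) = (\<lambda>h. h *\<^sub>R G' (0,1))" by (rule ext) (rule lin)
  from d1 show ?thesis unfolding e .
qed

lemma partial1:
  fixes G :: "real\<times>real \<Rightarrow> 'b::real_normed_vector"
  assumes "(G has_derivative G') (at (w,d))"
  shows "((\<lambda>t. G (t,d)) has_derivative (\<lambda>h. h *\<^sub>R G' (1,0))) (at w)"
proof -
  have "((\<lambda>t. (t,d)) has_derivative (\<lambda>h. (h,0))) (at w)"
    by (rule has_derivative_Pair[OF has_derivative_ident has_derivative_const])
  from has_derivative_compose[OF this assms]
  have d1: "((\<lambda>t. G (t,d)) has_derivative (\<lambda>h. G' (h,0))) (at w)" by (simp add: o_def)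
  have lin: "G' (h,0) = h *\<^sub>R G' (1,0)" for h
  proof -
    have bl: "bounded_linear G'" using assms has_derivative_bounded_linear by blast
    have "G' (h,0) = G' (h *\<^sub>R (1,0))" by simp
    also have "\<dots> = h *\<^sub>R G' (1,0)" by (rule linear_cmul[OF bounded_linear.linear[OF bl]])
    finally show ?thesis .
  qed
  have e: "(\<lambda>h. G' (h,0)) = (\<lambda>h. h *\<^sub>R G' (1,0))" by (rule ext) (rule lin)
  from d1 show ?thesis unfolding e .
qed

lemma real_deriv_of_has_derivative:
  "((g::real\<Rightarrow>real) has_derivative (\<lambda>h. h *\<^sub>R c)) F \<Longrightarrow> (g has_real_derivative c) F"
proof -
  have e: "(\<lambda>h. h *\<^sub>R c) = (*) c" by (rule ext) simp
  show "((g::real\<Rightarrow>real) has_derivative (\<lambda>h. h *\<^sub>R c)) F \<Longrightarrow> (g has_real_derivative c) F"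
    unfolding has_field_derivative_def e .
qed

lemma blin_apply_deriv:
  fixes D :: "real \<Rightarrow> ('a::real_normed_vector \<Rightarrow>\<^sub>L real)"
  assumes "(D has_derivative (\<lambda>h. h *\<^sub>R E)) (at x)"
  shows "((\<lambda>t. blinfun_apply (D t) c) has_real_derivative blinfun_apply E c) (at x)"
proof -
  have "bounded_linear (\<lambda>X::'a \<Rightarrow>\<^sub>L real. blinfun_apply X c)" by (rule blinfun.bounded_linear_left)
  from bounded_linear.has_derivative[OF this assms]
  have "((\<lambda>t. blinfun_apply (D t) c) has_derivative (\<lambda>h. blinfun_apply (h *\<^sub>R E) c)) (at x)" .
  then show ?thesis by (intro real_deriv_of_has_derivative) (simp add: blinfun.scaleR_left)
qed

lemma C2_local:
  fixes P :: "real \<Rightarrow> real \<Rightarrow> real"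
  assumes "C2_at (\<lambda>(w,d). P w d) (z,0)"
  shows "\<exists>r>0. (\<forall>w. \<bar>w - z\<bar> < r \<longrightarrow> (skew_psi P has_real_derivative skew_dpsi P w) (at w))
          \<and> isCont (skew_dpsi P) z \<and> ((\<lambda>d. P z d) has_real_derivative skew_psi P z) (at 0)"
proof -
  define F where "F = (\<lambda>(w,d). P w d)"
  obtain U D D2 where U: "open U" "(z,0) \<in> U"
    and dF: "\<forall>q\<in>U. (F has_derivative blinfun_apply (D q)) (at q)"
    and dD: "\<forall>q\<in>U. (D has_derivative blinfun_apply (D2 q)) (at q)"
    and cD2: "continuous (at (z,0)) D2"
    using assms unfolding C2_at_def F_def by blast
  obtain r where r: "r > 0" "ball (z,0) r \<subseteq> U" using U open_contains_ball by blast
  have inU: "(w,d) \<in> U" if "\<bar>w - z\<bar> + \<bar>d\<bar> < r" for w d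
  proof -
    have "dist (z,0) (w,d) = norm (z - w, 0 - d)" by (simp add: dist_norm)
    also have "\<dots> \<le> norm (z - w) + norm (0 - d)" by (rule norm_Pair_le)
    also have "\<dots> = \<bar>w - z\<bar> + \<bar>d\<bar>" by simp
    finally have "dist (z,0) (w,d) \<le> \<bar>w - z\<bar> + \<bar>d\<bar>" .
    then show ?thesis using that r by auto
  qed
  have pd_d: "((\<lambda>t. P w t) has_real_derivative blinfun_apply (D (w,d)) (0,1)) (at d)" if "(w,d) \<in> U" for w d
    using partial2[OF dF[rule_format, OF that]] by (intro real_deriv_of_has_derivative) (simp add: F_def)
  have pd_w: "((\<lambda>t. P t d) has_real_derivative blinfun_apply (D (w,d)) (1,0)) (at w)" if "(w,d) \<in> U" for w d
    using partial1[OF dF[rule_format, OF that]] by (intro real_deriv_of_has_derivative) (simp add: F_def)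
  have psi_eq: "skew_psi P w = blinfun_apply (D (w,0)) (0,1)" if "(w,0) \<in> U" for w
    unfolding skew_psi_def using pd_d[OF that] by (rule DERIV_imp_deriv)
  have dpsi_eq: "skew_dpsi P w = blinfun_apply (blinfun_apply (D2 (w,0)) (0,1)) (1,0)"
    and dpsi': "(skew_psi P has_real_derivative skew_dpsi P w) (at w)"
    if w: "\<bar>w - z\<bar> < r" for w
  proof -
    define r' where "r' = r - \<bar>w - z\<bar>"
    have r': "r' > 0" using w by (simp add: r'_def)
    have w0: "(w,0) \<in> U" using inU[of w 0] w by simp
    have A: "((\<lambda>t. blinfun_apply (D (w,t)) (1,0)) has_real_derivative
              blinfun_apply (blinfun_apply (D2 (w,0)) (0,1)) (1,0)) (at 0)"
      by (rule blin_apply_deriv, rule partial2, rule dD[rule_format, OF w0])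
    have B: "((\<lambda>t. deriv (\<lambda>v. P v t) w) has_real_derivative
              blinfun_apply (blinfun_apply (D2 (w,0)) (0,1)) (1,0)) (at 0)"
    proof (rule has_field_derivative_transform_within_open[OF A, of "ball 0 r'"])
      show "open (ball (0::real) r')" by simp
      show "(0::real) \<in> ball 0 r'" using r' by simp
      fix t :: real assume "t \<in> ball 0 r'"
      then have "(w,t) \<in> U" using inU[of w t] by (simp add: r'_def)
      then show "blinfun_apply (D (w,t)) (1,0) = deriv (\<lambda>v. P v t) w"
        using DERIV_imp_deriv[OF pd_w] by simp
    qed
    show dpe: "skew_dpsi P w = blinfun_apply (blinfun_apply (D2 (w,0)) (0,1)) (1,0)"
      unfolding skew_dpsi_def using B by (rule DERIV_imp_deriv)
    have C: "((\<lambda>t. blinfun_apply (D (t,0)) (0,1)) has_real_derivative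
              blinfun_apply (blinfun_apply (D2 (w,0)) (1,0)) (0,1)) (at w)"
      by (rule blin_apply_deriv, rule partial1, rule dD[rule_format, OF w0])
    have E: "(skew_psi P has_real_derivative
              blinfun_apply (blinfun_apply (D2 (w,0)) (1,0)) (0,1)) (at w)"
    proof (rule has_field_derivative_transform_within_open[OF C, of "ball z r"])
      show "open (ball z r)" by simp
      show "w \<in> ball z r" using w by (simp add: dist_real_def abs_minus_commute)
      fix t :: real assume "t \<in> ball z r"
      then have "(t,0) \<in> U" using inU[of t 0] by (simp add: dist_real_def abs_minus_commute)
      then show "blinfun_apply (D (t,0)) (0,1) = skew_psi P t" using psi_eq by simp
    qed
    have S: "blinfun_apply (blinfun_apply (D2 (w,0)) (0,1)) (1,0) = blinfun_apply (blinfun_apply (D2 (w,0)) (1,0)) (0,1)"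
      by (rule second_deriv_symm[OF U(1) w0 dF dD[rule_format, OF w0]])
    show "(skew_psi P has_real_derivative skew_dpsi P w) (at w)" using E unfolding dpe S .
  qed
  have cont: "isCont (skew_dpsi P) z"
  proof -
    have c1: "isCont (\<lambda>w. D2 (w,0)) z"
    proof -
      have "isCont (\<lambda>w::real. (w, 0::real)) z" by (intro continuous_intros)
      from continuous_at_compose[OF this] cD2 show ?thesis by (simp add: o_def)
    qed
    have c: "isCont (\<lambda>w. blinfun_apply (blinfun_apply (D2 (w,0)) (0,1)) (1,0)) z"
      by (intro continuous_intros c1)
    have ev: "eventually (\<lambda>w. skew_dpsi P w = blinfun_apply (blinfun_apply (D2 (w,0)) (0,1)) (1,0)) (nhds z)"
      unfolding eventually_nhds
      by (rule exI[of _ "ball z r"]) (use r dpsi_eq in \<open>auto simp: dist_real_def abs_minus_commute\<close>)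
    show ?thesis using isCont_cong[OF ev] c by simp
  qed
  have "((\<lambda>d. P z d) has_real_derivative skew_psi P z) (at 0)"
    using pd_d[OF U(2)] psi_eq[OF U(2)] by simp
  then show ?thesis using r dpsi' cont by blast
qed



lemma psi_facts:
  fixes P :: "real \<Rightarrow> real \<Rightarrow> real"
  assumes sk: "skewing_function P" and C2: "\<forall>z. C2_at (\<lambda>(w,d). P w d) (z,0)"
  shows "\<forall>z. (skew_psi P has_real_derivative skew_dpsi P z) (at z)"
    and "\<forall>z. isCont (skew_dpsi P) z"
    and "\<forall>z. isCont (skew_psi P) z"
    and "\<forall>z. skew_psi P (-z) = - skew_psi P z"
    and "\<forall>z. skew_dpsi P (-z) = skew_dpsi P z"
proof -
  have loc: "\<exists>r>0. (\<forall>w. \<bar>w - z\<bar> < r \<longrightarrow> (skew_psi P has_real_derivative skew_dpsi P w) (at w))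
          \<and> isCont (skew_dpsi P) z \<and> ((\<lambda>d. P z d) has_real_derivative skew_psi P z) (at 0)" for z
    using C2_local C2 by blast
  show d: "\<forall>z. (skew_psi P has_real_derivative skew_dpsi P z) (at z)"
  proof
    fix z from loc[of z] obtain r where "r>0" "\<forall>w. \<bar>w - z\<bar> < r \<longrightarrow> (skew_psi P has_real_derivative skew_dpsi P w) (at w)" by blast
    then show "(skew_psi P has_real_derivative skew_dpsi P z) (at z)" by auto
  qed
  show "\<forall>z. isCont (skew_dpsi P) z" using loc by blast
  show "\<forall>z. isCont (skew_psi P) z" using d DERIV_isCont by blast
  have neg: "\<forall>z d. P (-z) d = 1 - P z d" using sk unfolding skewing_function_def by (auto simp: algebra_simps)
  show odd: "\<forall>z. skew_psi P (-z) = - skew_psi P z"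
  proof
    fix z
    have "((\<lambda>d. P z d) has_real_derivative skew_psi P z) (at 0)" using loc by blast
    then have "((\<lambda>d. 1 - P z d) has_real_derivative 0 - skew_psi P z) (at 0)"
      by (intro DERIV_diff DERIV_const)
    then have "deriv (\<lambda>d. 1 - P z d) 0 = - skew_psi P z" by (simp add: DERIV_imp_deriv)
    moreover have "(\<lambda>d. P (-z) d) = (\<lambda>d. 1 - P z d)" using neg by auto
    ultimately show "skew_psi P (-z) = - skew_psi P z" unfolding skew_psi_def by simp
  qed
  show "\<forall>z. skew_dpsi P (-z) = skew_dpsi P z"
  proof
    fix z
    have "DERIV (skew_psi P) (- z) :> skew_dpsi P (-z)" using d by blast
    then have A: "DERIV (\<lambda>x. skew_psi P (- x)) z :> - skew_dpsi P (-z)" using DERIV_mirror by blast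
    have B: "DERIV (\<lambda>x. - skew_psi P x) z :> - skew_dpsi P z" using d by (intro DERIV_minus) blast
    have e: "(\<lambda>x. skew_psi P (- x)) = (\<lambda>x. - skew_psi P x)" using odd by auto
    from A B show "skew_dpsi P (-z) = skew_dpsi P z" unfolding e using DERIV_unique by fastforce
  qed
qed

lemma not_int_const:
  assumes "c \<noteq> (0::real)" shows "\<not> integrable lborel (\<lambda>_::real. c)"
proof
  assume "integrable lborel (\<lambda>_::real. c)"
  then have "(\<integral>\<^sup>+x. ennreal (norm c) \<partial>(lborel::real measure)) < \<infinity>"
    unfolding integrable_iff_bounded by blast
  moreover have "(\<integral>\<^sup>+x. ennreal (norm c) \<partial>(lborel::real measure)) = \<infinity>"
    using assms by (simp add: ennreal_mult_top)
  ultimately show False by simp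
qed

lemma cont_ae_zero:
  fixes g :: "real \<Rightarrow> real"
  assumes c: "continuous_on UNIV g" and ae: "AE x in lborel. g x = 0"
  shows "g x = 0"
proof (rule ccontr)
  assume n: "g x \<noteq> 0"
  have op: "open {y. g y \<noteq> 0}" using c by (intro open_Collect_neq) (auto intro: continuous_intros)
  obtain r where r: "r > 0" "ball x r \<subseteq> {y. g y \<noteq> 0}" using open_contains_ball op n by blast
  have meas: "{y. g y \<noteq> 0} \<in> sets lborel"
    using borel_measurable_continuous_onI[OF c] by measurable
  have "emeasure lborel {y. g y \<noteq> 0} = 0"
    using AE_iff_measurable[OF meas] ae by auto
  moreover have "{x - r/2 .. x + r/2} \<subseteq> {y. g y \<noteq> 0}"
    using r by (intro subset_trans[OF _ r(2)]) (auto simp: dist_real_def)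
  then have "emeasure lborel {x - r/2 .. x + r/2} \<le> emeasure lborel {y. g y \<noteq> 0}"
    by (intro emeasure_mono meas)
  ultimately show False using r by simp
qed

lemma prod_integrable:
  fixes g h f :: "real \<Rightarrow> real"
  assumes g: "g \<in> borel_measurable lborel" and h: "h \<in> borel_measurable lborel"
    and f: "f \<in> borel_measurable lborel" "\<forall>x. f x \<ge> 0"
    and ig: "integrable lborel (\<lambda>x. (g x)\<^sup>2 * f x)" and ih: "integrable lborel (\<lambda>x. (h x)\<^sup>2 * f x)"
  shows "integrable lborel (\<lambda>x. g x * h x * f x)"
proof -
  have i: "integrable lborel (\<lambda>x. (g x)\<^sup>2 * f x + (h x)\<^sup>2 * f x)" using ig ih by simp
  have m: "(\<lambda>x. g x * h x * f x) \<in> borel_measurable lborel" using g h f by measurable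
  have ae: "AE x in lborel. norm (g x * h x * f x) \<le> norm ((g x)\<^sup>2 * f x + (h x)\<^sup>2 * f x)"
  proof (rule AE_I2)
    fix x
    have e: "(\<bar>g x\<bar> - \<bar>h x\<bar>)\<^sup>2 = (g x)\<^sup>2 - 2*\<bar>g x * h x\<bar> + (h x)\<^sup>2"
      by (simp add: power2_eq_square abs_mult algebra_simps)
    have "0 \<le> (\<bar>g x\<bar> - \<bar>h x\<bar>)\<^sup>2" by simp
    then have "\<bar>g x * h x\<bar> \<le> (g x)\<^sup>2 + (h x)\<^sup>2" unfolding e by simp
    then have "\<bar>g x * h x\<bar> * f x \<le> ((g x)\<^sup>2 + (h x)\<^sup>2) * f x" using f(2) by (intro mult_right_mono) auto
    then show "norm (g x * h x * f x) \<le> norm ((g x)\<^sup>2 * f x + (h x)\<^sup>2 * f x)"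
      using f(2)[rule_format, of x] by (simp add: abs_mult algebra_simps)
  qed
  show ?thesis using Bochner_Integration.integrable_bound[OF i m ae] .
qed



lemma gram_kernel:
  fixes s :: "'n::finite \<Rightarrow> real \<Rightarrow> real" and f :: "real \<Rightarrow> real"
  assumes cont: "\<forall>i. continuous_on UNIV (s i)" and fpos: "\<forall>x. f x > 0"
    and int: "\<forall>i j. integrable lborel (\<lambda>x. s i x * s j x * f x)"
    and det: "det (\<chi> i j. LINT x|lborel. s i x * s j x * f x) = 0"
  shows "\<exists>v. v \<noteq> 0 \<and> (\<forall>x. (\<Sum>i\<in>UNIV. v$i * s i x) = 0)"
proof -
  define M where "M = (\<chi> i j. LINT x|lborel. s i x * s j x * f x)"
  have "\<not> invertible M" using det invertible_det_nz unfolding M_def by auto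
  then have "\<not> (\<exists>B. B ** M = mat 1)" using invertible_left_inverse by auto
  then obtain v where Mv: "M *v v = 0" and v0: "v \<noteq> 0" using matrix_left_invertible_ker by blast
  define S where "S x = (\<Sum>i\<in>UNIV. v$i * s i x)" for x
  have "(\<Sum>i\<in>UNIV. v$i * (M *v v)$i) = 0" using Mv by simp
  then have Q: "(\<Sum>i\<in>UNIV. \<Sum>j\<in>UNIV. v$i * v$j * (LINT x|lborel. s i x * s j x * f x)) = 0"
    unfolding M_def matrix_vector_mult_def by (simp add: sum_distrib_left algebra_simps)
  have sq: "(S x)\<^sup>2 * f x = (\<Sum>i\<in>UNIV. \<Sum>j\<in>UNIV. v$i * v$j * (s i x * s j x * f x))" for x
  proof -
    have "(S x)\<^sup>2 * f x = (\<Sum>i\<in>UNIV. \<Sum>j\<in>UNIV. (v$i * s i x) * (v$j * s j x)) * f x"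
      unfolding S_def power2_eq_square sum_product ..
    also have "\<dots> = (\<Sum>i\<in>UNIV. \<Sum>j\<in>UNIV. (v$i * s i x) * (v$j * s j x) * f x)"
      by (simp add: sum_distrib_right)
    also have "\<dots> = (\<Sum>i\<in>UNIV. \<Sum>j\<in>UNIV. v$i * v$j * (s i x * s j x * f x))"
      by (intro sum.cong refl) (simp add: algebra_simps)
    finally show ?thesis .
  qed
  have intij: "integrable lborel (\<lambda>x. v$i * v$j * (s i x * s j x * f x))" for i j
    using int by simp
  have intS: "integrable lborel (\<lambda>x. (S x)\<^sup>2 * f x)"
    unfolding sq by (rule Bochner_Integration.integrable_sum, rule Bochner_Integration.integrable_sum, rule intij)
  have "(LINT x|lborel. (S x)\<^sup>2 * f x) = (\<Sum>i\<in>UNIV. \<Sum>j\<in>UNIV. v$i * v$j * (LINT x|lborel. s i x * s j x * f x))"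
  proof -
    have "(LINT x|lborel. (S x)\<^sup>2 * f x) = (LINT x|lborel. (\<Sum>i\<in>UNIV. \<Sum>j\<in>UNIV. v$i * v$j * (s i x * s j x * f x)))"
      unfolding sq ..
    also have "\<dots> = (\<Sum>i\<in>UNIV. (LINT x|lborel. (\<Sum>j\<in>UNIV. v$i * v$j * (s i x * s j x * f x))))"
      by (rule Bochner_Integration.integral_sum) (rule Bochner_Integration.integrable_sum, rule intij)
    also have "\<dots> = (\<Sum>i\<in>UNIV. \<Sum>j\<in>UNIV. (LINT x|lborel. v$i * v$j * (s i x * s j x * f x)))"
      by (intro sum.cong refl Bochner_Integration.integral_sum intij)
    also have "\<dots> = (\<Sum>i\<in>UNIV. \<Sum>j\<in>UNIV. v$i * v$j * (LINT x|lborel. s i x * s j x * f x))"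
      by simp
    finally show ?thesis .
  qed
  then have "(LINT x|lborel. (S x)\<^sup>2 * f x) = 0" using Q by simp
  moreover have "AE x in lborel. 0 \<le> (S x)\<^sup>2 * f x"
    using fpos by (intro AE_I2) (simp add: less_imp_le)
  ultimately have "AE x in lborel. (S x)\<^sup>2 * f x = 0"
    using integral_nonneg_eq_0_iff_AE[OF intS] by blast
  then have ae: "AE x in lborel. S x = 0"
    by (rule AE_mp) (use fpos in \<open>auto intro!: AE_I2 simp: less_imp_neq[symmetric]\<close>)
  have cS: "continuous_on UNIV S" unfolding S_def using cont by (intro continuous_intros) auto
  have "S x = 0" for x using cont_ae_zero[OF cS ae] .
  then show ?thesis using v0 unfolding S_def by blast
qed



lemma ode_linear:
  fixes \<psi> d\<psi> \<Psi> :: "real \<Rightarrow> real" and a \<beta> :: real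
  assumes dpsi: "\<forall>z. (\<psi> has_real_derivative d\<psi> z) (at z)" and dPsi: "\<forall>z. (\<Psi> has_real_derivative \<psi> z) (at z)"
    and psi0: "\<psi> 0 = 0" and eq: "\<forall>z. d\<psi> z / a - (\<psi> z)\<^sup>2 = \<beta> * (a*z*\<psi> z - 1)" and a: "a \<noteq> 0"
  shows "\<psi> z = -(a*\<beta>) * z"
proof -
  define w where "w z = a*\<psi> z + a\<^sup>2*\<beta>*z" for z
  define E where "E z = exp (-a*\<Psi> z)" for z
  define H where "H z = w z * E z" for z
  have dd: "d\<psi> z = a*((\<psi> z)\<^sup>2 + \<beta>*(a*z*\<psi> z - 1))" for z
    using eq[rule_format, of z] a by (simp add: field_simps)
  have "DERIV H x :> 0" for x
  proof -
    have dw: "DERIV w x :> a * d\<psi> x + a\<^sup>2*\<beta>*1"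
      unfolding w_def by (intro DERIV_add DERIV_cmult dpsi[rule_format] DERIV_ident)
    have dE: "DERIV E x :> E x * (-a * \<psi> x)"
      unfolding E_def by (intro DERIV_fun_exp DERIV_cmult dPsi[rule_format])
    have d1: "DERIV H x :> (a * d\<psi> x + a\<^sup>2*\<beta>*1) * E x + E x * (-a * \<psi> x) * w x"
      unfolding H_def using DERIV_mult[OF dw dE] .
    have e0: "(a * d\<psi> x + a\<^sup>2*\<beta>*1) * E x + E x * (-a * \<psi> x) * w x = 0"
      unfolding dd w_def by (simp add: algebra_simps power2_eq_square)
    show ?thesis using d1 unfolding e0 .
  qed
  then have "H z = H 0" using DERIV_isconst_all by blast
  also have "H 0 = 0" unfolding H_def w_def by (simp add: psi0)
  finally have "w z = 0" unfolding H_def E_def by simp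
  then have "a * (\<psi> z + a*\<beta>*z) = 0" unfolding w_def by (simp add: power2_eq_square algebra_simps)
  then have "\<psi> z + a*\<beta>*z = 0" using a by simp
  then show ?thesis by (simp add: algebra_simps)
qed

lemma quad_prim:
  fixes \<Psi> :: "real \<Rightarrow> real"
  assumes "\<forall>z. (\<Psi> has_real_derivative c * z) (at z)"
  shows "\<Psi> z = \<Psi> 0 + c * z\<^sup>2 / 2"
proof -
  have "DERIV (\<lambda>z. \<Psi> z - (c/2) * (z*z)) x :> 0" for x
  proof -
    have dx: "DERIV (\<lambda>z. z*z) x :> x + x" using DERIV_mult[OF DERIV_ident DERIV_ident, of x] by simp
    have "DERIV (\<lambda>z. \<Psi> z - (c/2) * (z*z)) x :> c * x - (c/2) * (x + x)"
      by (intro DERIV_diff DERIV_cmult dx assms[rule_format])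
    then show ?thesis by (simp add: algebra_simps)
  qed
  then have "\<Psi> z - (c/2) * (z*z) = \<Psi> 0 - (c/2) * (0*0)" using DERIV_isconst_all[of "\<lambda>z. \<Psi> z - (c/2) * (z*z)"] by blast
  then show ?thesis by (simp add: power2_eq_square)
qed

lemma gauss_char:
  fixes f :: "real \<Rightarrow> real"
  assumes fK: "\<forall>z. f z = K * exp (\<gamma> * z\<^sup>2 / 2)" and K: "K > 0"
    and i1: "integrable lborel f" and e1: "(LINT z|lborel. f z) = 1"
    and e2: "(LINT z|lborel. z\<^sup>2 * f z) = 1"
  shows "f z = std_normal_density z"
proof -
  have g: "\<gamma> < 0"
  proof (rule ccontr)
    assume "\<not> \<gamma> < 0"
    then have Kf: "K \<le> f x" for x using fK K by (simp add: zero_le_mult_iff)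
    have "norm K \<le> norm (f x)" for x using Kf[of x] K unfolding real_norm_def by arith
    then have "integrable lborel (\<lambda>_::real. K)"
      by (intro Bochner_Integration.integrable_bound[OF i1]) (auto intro!: AE_I2)
    then show False using not_int_const[of K] K by simp
  qed
  define s where "s = sqrt (-1/\<gamma>)"
  have s: "s > 0" "s\<^sup>2 = -1/\<gamma>" using g by (auto simp: s_def)
  have gs: "\<gamma> = -1/s\<^sup>2" using s g by (simp add: field_simps)
  define C where "C = K * sqrt (2 * pi * s\<^sup>2)"
  have fN: "f z = C * normal_density 0 s z" for z
    unfolding fK[rule_format] normal_density_def C_def gs using s g by (simp add: field_simps)
  have "(LINT z|lborel. f z) = C" unfolding fN using s(1) by simp
  then have C1: "C = 1" using e1 by simp
  have ee: "(\<lambda>z. z\<^sup>2 * f z) = (\<lambda>z. C * (normal_density 0 s z * (z - 0) ^ (2 * 1)))"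
    by (rule ext) (simp add: fN power2_eq_square algebra_simps)
  have "(LINT z|lborel. z\<^sup>2 * f z) = C * (LINT z|lborel. normal_density 0 s z * (z - 0) ^ (2 * 1))"
    unfolding ee by (rule integral_mult_right_zero)
  also have "(LINT z|lborel. normal_density 0 s z * (z - 0) ^ (2 * 1)) = s\<^sup>2"
    by (subst integral_normal_moment_even[OF s(1)]) (use s(1) in \<open>simp add: field_simps\<close>)
  finally have "s\<^sup>2 = 1" using e2 C1 by simp
  then have "s = 1" using s by (simp add: power2_eq_1_iff)
  then show ?thesis using fN C1 by simp
qed



lemma three_neq: "((3::3) = 1) = False" "((3::3) = 2) = False" "((2::3) = 1) = False"
  by simp_all

theorem theorem1:
  fixes f :: "real \<Rightarrow> real" and P :: "real \<Rightarrow> real \<Rightarrow> real"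
    and \<Psi> :: "real \<Rightarrow> real" and a :: real
  assumes "sym_std_density f"
    and "skewing_function P"
    and "assumption_A2plus f P \<Psi> a"
  shows "double_singular f P a \<longleftrightarrow>
           ((\<forall>z. f z = std_normal_density z) \<and> (\<exists>c. \<forall>z. skew_psi P z = c * z))"
proof -
  note sd = assms(1)[unfolded sym_std_density_def]
  have fm: "f \<in> borel_measurable lborel" and fpos: "\<forall>z. f z > 0" and fi: "integrable lborel f"
    and f1: "(LINT z|lborel. f z) = 1" and f2: "(LINT z|lborel. z\<^sup>2 * f z) = 1"
    using sd by auto
  have sk: "skewing_function P" by (rule assms(2))
  have Phalf: "\<forall>z. P z 0 = 1/2" using sk unfolding skewing_function_def by blast
  note A = assms(3)[unfolded assumption_A2plus_def assumption_A2_def]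
  have dPsi: "\<forall>z. (\<Psi> has_real_derivative skew_psi P z) (at z)"
    and ipsi: "integrable lborel (\<lambda>z. (skew_psi P z)\<^sup>2 * f z)"
    and aA: "a \<in> exp_param_set \<Psi>" and fg: "f = g_exp \<Psi> a"
    and C2: "\<forall>z. C2_at (\<lambda>(w, d). P w d) (z, 0)"
    and i2: "integrable lborel (\<lambda>z. (skew_psi P z)\<^sup>2 * z\<^sup>2 * f z)"
    and i3: "integrable lborel (\<lambda>z. (2 / a * skew_dpsi P z - 2 * (skew_psi P z)\<^sup>2)\<^sup>2 * f z)"
    using A by auto
  have dpsi: "\<forall>z. (skew_psi P has_real_derivative skew_dpsi P z) (at z)"
    and cdpsi: "\<forall>z. isCont (skew_dpsi P) z"
    and cpsi: "\<forall>z. isCont (skew_psi P) z"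
    and podd: "\<forall>z. skew_psi P (-z) = - skew_psi P z"
    and deven: "\<forall>z. skew_dpsi P (-z) = skew_dpsi P z"
    using psi_facts[OF sk C2] by auto
  have iexp: "integrable lborel (\<lambda>z. exp (- a * \<Psi> z))" using aA unfolding exp_param_set_def by simp
  have a0: "a \<noteq> 0"
  proof
    assume "a = 0"
    then have "integrable lborel (\<lambda>_::real. 1::real)" using iexp by simp
    then show False using not_int_const[of 1] by simp
  qed
  show ?thesis
  proof
    assume ds: "double_singular f P a"
    define s where "s i x = double_scores P a 0 1 i x" for i x
    have s1: "s 1 x = a * skew_psi P x" for x unfolding s_def double_scores_def by simp
    have s2: "s 2 x = a * x * skew_psi P x - 1" for x unfolding s_def double_scores_def by simp
    have s3: "s 3 x = 2 * (skew_dpsi P x / a - (skew_psi P x)\<^sup>2)" for x unfolding s_def double_scores_def by simp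
    have dens: "skew_sym_density f P 0 1 0 x = f x" for x
      unfolding skew_sym_density_def using Phalf[rule_format, of x] by simp
    have Meq: "double_fisher_info f P a 0 1 = (\<chi> i j. LINT x|lborel. s i x * s j x * f x)"
      unfolding double_fisher_info_def s_def dens ..
    have det0: "det (\<chi> i j. LINT x|lborel. s i x * s j x * f x) = 0"
      using ds unfolding double_singular_def Meq[symmetric] by simp
    have cpsi': "continuous_on UNIV (skew_psi P)" using cpsi by (simp add: continuous_at_imp_continuous_on)
    have cdpsi': "continuous_on UNIV (skew_dpsi P)" using cdpsi by (simp add: continuous_at_imp_continuous_on)
    have cont: "continuous_on UNIV (s i)" for i
    proof -
      have "i = 1 \<or> i = 2 \<or> i = 3" by (rule exhaust_3)
      moreover have "continuous_on UNIV (s 1)" unfolding s1[abs_def] by (intro continuous_intros cpsi')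
      moreover have "continuous_on UNIV (s 2)" unfolding s2[abs_def] by (intro continuous_intros cpsi')
      moreover have "continuous_on UNIV (s 3)" unfolding s3[abs_def] using a0 by (intro continuous_intros cpsi' cdpsi') auto
      ultimately show ?thesis by auto
    qed
    have meas: "s i \<in> borel_measurable lborel" for i
      using borel_measurable_continuous_onI[OF cont[of i]] by simp
    have fnn: "\<forall>x. f x \<ge> 0" using fpos less_imp_le by blast
    have xpsi_f: "integrable lborel (\<lambda>x. (x * skew_psi P x) * 1 * f x)"
    proof (rule prod_integrable[OF _ _ fm fnn])
      show "(\<lambda>x. x * skew_psi P x) \<in> borel_measurable lborel"
        using borel_measurable_continuous_onI[of "\<lambda>x. x * skew_psi P x"] cpsi'
        by (simp add: continuous_intros)
      show "(\<lambda>x. 1::real) \<in> borel_measurable lborel" by simp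
      show "integrable lborel (\<lambda>x. (x * skew_psi P x)\<^sup>2 * f x)"
        using i2 by (simp add: power_mult_distrib algebra_simps)
      show "integrable lborel (\<lambda>x. 1\<^sup>2 * f x)" using fi by simp
    qed
    have sq: "integrable lborel (\<lambda>x. (s i x)\<^sup>2 * f x)" for i
    proof -
      have "i = 1 \<or> i = 2 \<or> i = 3" by (rule exhaust_3)
      moreover have "integrable lborel (\<lambda>x. (s 1 x)\<^sup>2 * f x)"
        unfolding s1 using ipsi by (simp add: power_mult_distrib mult.assoc)
      moreover have "integrable lborel (\<lambda>x. (s 2 x)\<^sup>2 * f x)"
      proof -
        have e: "(\<lambda>x. (s 2 x)\<^sup>2 * f x) = (\<lambda>x. a\<^sup>2 * ((skew_psi P x)\<^sup>2 * x\<^sup>2 * f x) - 2 * a * ((x * skew_psi P x) * 1 * f x) + f x)"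
          by (rule ext) (simp add: s2 power2_eq_square algebra_simps)
        show ?thesis unfolding e using i2 xpsi_f fi by simp
      qed
      moreover have "integrable lborel (\<lambda>x. (s 3 x)\<^sup>2 * f x)"
      proof -
        have e: "(\<lambda>x. (s 3 x)\<^sup>2 * f x) = (\<lambda>x. (2 / a * skew_dpsi P x - 2 * (skew_psi P x)\<^sup>2)\<^sup>2 * f x)"
          by (rule ext) (simp add: s3 algebra_simps)
        show ?thesis unfolding e using i3 .
      qed
      ultimately show ?thesis by auto
    qed
    have int: "\<forall>i j. integrable lborel (\<lambda>x. s i x * s j x * f x)"
      using prod_integrable[OF meas meas fm fnn sq sq] by blast
    obtain v :: "real^3" where v0: "v \<noteq> 0" and vS: "\<forall>x. (\<Sum>i\<in>UNIV. v$i * s i x) = 0"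
      using gram_kernel[OF cont[THEN allI] fpos int det0] by blast
    have E: "v$1 * (a * skew_psi P x) + v$2 * (a * x * skew_psi P x - 1)
             + v$3 * (2 * (skew_dpsi P x / a - (skew_psi P x)\<^sup>2)) = 0" for x
      using vS[rule_format, of x] unfolding sum_3 s1 s2 s3 .
    have v1psi: "v$1 * (a * skew_psi P x) = 0" for x
    proof -
      have "v$1 * (a * skew_psi P (-x)) + v$2 * (a * (-x) * skew_psi P (-x) - 1)
             + v$3 * (2 * (skew_dpsi P (-x) / a - (skew_psi P (-x))\<^sup>2)) = 0" by (rule E)
      then have "- v$1 * (a * skew_psi P x) + v$2 * (a * x * skew_psi P x - 1)
             + v$3 * (2 * (skew_dpsi P x / a - (skew_psi P x)\<^sup>2)) = 0"
        using podd deven by simp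
      with E[of x] show ?thesis by linarith
    qed
    have v1: "v$1 = 0"
    proof (rule ccontr)
      assume "v$1 \<noteq> 0"
      then have p0: "skew_psi P x = 0" for x using v1psi[of x] a0 by simp
      have "\<Psi> x = \<Psi> 0" for x
        using DERIV_isconst_all[of \<Psi> x 0] dPsi p0 by simp
      then have "(\<lambda>z. exp (- a * \<Psi> z)) = (\<lambda>_. exp (- a * \<Psi> 0))" by auto
      then show False using iexp not_int_const[of "exp (- a * \<Psi> 0)"] by simp
    qed
    have v3: "v$3 \<noteq> 0"
    proof
      assume v3: "v$3 = 0"
      have "v$2 = 0" using E[of 0] v1 v3 by simp
      then have "v = 0" using v1 v3 by (metis (full_types) exhaust_3 vec_eq_iff zero_index)
      then show False using v0 by simp
    qed
    define \<beta> where "\<beta> = - v$2 / (2 * v$3)"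
    have eq: "\<forall>z. skew_dpsi P z / a - (skew_psi P z)\<^sup>2 = \<beta> * (a*z* skew_psi P z - 1)"
    proof
      fix z
      have "v$2 * (a * z * skew_psi P z - 1) + v$3 * (2 * (skew_dpsi P z / a - (skew_psi P z)\<^sup>2)) = 0"
        using E[of z] v1 by simp
      then show "skew_dpsi P z / a - (skew_psi P z)\<^sup>2 = \<beta> * (a*z* skew_psi P z - 1)"
        using v3 unfolding \<beta>_def by (simp add: field_simps)
    qed
    have psi0: "skew_psi P 0 = 0" using podd[rule_format, of 0] by simp
    have lin: "skew_psi P z = -(a*\<beta>) * z" for z
      by (rule ode_linear[OF dpsi dPsi psi0 eq a0])
    have Psiq: "\<Psi> z = \<Psi> 0 + (-(a*\<beta>)) * z\<^sup>2 / 2" for z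
      by (rule quad_prim) (use dPsi lin in simp)
    define N where "N = (LINT t|lborel. exp (- a * \<Psi> t))"
    have fz: "f z = exp (- a * \<Psi> z) / N" for z unfolding fg g_exp_def N_def ..
    have fK: "\<forall>z. f z = f 0 * exp ((a\<^sup>2*\<beta>) * z\<^sup>2 / 2)"
    proof
      fix z
      have "- a * \<Psi> z = - a * \<Psi> 0 + (a\<^sup>2*\<beta>) * z\<^sup>2 / 2"
        unfolding Psiq[of z] by (simp add: algebra_simps power2_eq_square)
      then have "exp (- a * \<Psi> z) = exp (- a * \<Psi> 0 + (a\<^sup>2*\<beta>) * z\<^sup>2 / 2)"
        by (rule arg_cong)
      also have "\<dots> = exp (- a * \<Psi> 0) * exp ((a\<^sup>2*\<beta>) * z\<^sup>2 / 2)" by (rule exp_add)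
      finally have "exp (- a * \<Psi> z) = exp (- a * \<Psi> 0) * exp ((a\<^sup>2*\<beta>) * z\<^sup>2 / 2)" .
      then show "f z = f 0 * exp ((a\<^sup>2*\<beta>) * z\<^sup>2 / 2)" unfolding fz by simp
    qed
    have "f z = std_normal_density z" for z
      by (rule gauss_char[OF fK _ fi f1 f2]) (use fpos in simp)
    then show "(\<forall>z. f z = std_normal_density z) \<and> (\<exists>c. \<forall>z. skew_psi P z = c * z)"
      using lin by blast
  next
    assume rhs: "(\<forall>z. f z = std_normal_density z) \<and> (\<exists>c. \<forall>z. skew_psi P z = c * z)"
    then obtain c where c: "\<forall>z. skew_psi P z = c * z" by blast
    have pe: "skew_psi P = (\<lambda>z. c * z)" using c by auto
    have dc: "skew_dpsi P z = c" for z
    proof -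
      have d0: "DERIV (\<lambda>z. c * z) z :> c * 1" by (intro DERIV_cmult DERIV_ident)
      have d1: "DERIV (skew_psi P) z :> skew_dpsi P z" using dpsi by blast
      then have d2: "DERIV (\<lambda>z. c * z) z :> skew_dpsi P z" unfolding pe .
      from DERIV_unique[OF d2 d0] show ?thesis by simp
    qed
    show "double_singular f P a"
      unfolding double_singular_def
    proof (intro allI impI)
      fix \<mu> \<sigma> :: real assume \<sigma>: "\<sigma> > 0"
      define k where "k = -2*c*\<sigma>/a"
      define M where "M = double_fisher_info f P a \<mu> \<sigma>"
      have alg: "2 * (c / a - (c * z)\<^sup>2) = k * ((a * z * (c * z) - 1) / \<sigma>)" for z
        unfolding k_def using a0 \<sigma> by (simp add: field_simps power2_eq_square)
      have sc: "double_scores P a \<mu> \<sigma> 3 x = k * double_scores P a \<mu> \<sigma> 2 x" for x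
        unfolding double_scores_def Let_def pe dc by (simp only: alg three_neq if_False if_True refl)
      have row: "M$3$j = k * M$2$j" for j
      proof -
        have "M$3$j = (LINT x|lborel. double_scores P a \<mu> \<sigma> 3 x * double_scores P a \<mu> \<sigma> j x
                             * skew_sym_density f P \<mu> \<sigma> 0 x)"
          unfolding M_def double_fisher_info_def by simp
        also have "\<dots> = (LINT x|lborel. k * (double_scores P a \<mu> \<sigma> 2 x * double_scores P a \<mu> \<sigma> j x
                             * skew_sym_density f P \<mu> \<sigma> 0 x))"
          unfolding sc by (simp only: mult.assoc)
        also have "\<dots> = k * (LINT x|lborel. double_scores P a \<mu> \<sigma> 2 x * double_scores P a \<mu> \<sigma> j x
                             * skew_sym_density f P \<mu> \<sigma> 0 x)"
          by (rule integral_mult_right_zero)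
        also have "\<dots> = k * M$2$j" unfolding M_def double_fisher_info_def by simp
        finally show ?thesis .
      qed
      show "det M = 0" unfolding det_3 row by (simp add: algebra_simps)
    qed
  qed
qed

end
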